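(* Let $K$ be a real compact nc convex set. Then the real operator system $A(K)$ has trivial involution ($f^*=f$ for all $f\in A(K)$) if and only if $K$ is symmetric. Equivalently, a real operator system $V$ has trivial involution if and only if $\varphi(v)^{\mathsf T}=\varphi(v)$ for every $n$, every $\varphi\in\mathrm{UCP}(V,M_n(\mathbb{R}))$ and every $v\in V$.
   Context: A real compact nc convex set $K$ over a real dual operator space $E$ is a graded set $K=\bigsqcup_nK_n$, $K_n\subseteq M_n(E)$ weak$^*$ compact, closed under direct sums $\sum\alpha_ix_i\alpha_i^{\mathsf T}$ and compressions $\beta^{\mathsf T}x\beta$ by real isometries. $K$ is called symmetric if every $k=[k_{ij}]\in K_n$ satisfies $k^{\mathsf T}=k$, i.e. $k_{ji}=k_{ij}$ for all $i,j$. $A(K)$ is the real operator system of continuous nc affine maps $K\to\bigsqcup_nM_n(\mathbb{R})$ with involution $f^*(k)=f(k)^{\mathsf T}$, cones $M_n(A(K))^+=\{[f_{ij}]:[f_{ij}(k)]\ge0\ \forall k\}$ and unit the constant $1$. Every real compact nc convex set $K$ is nc affinely homeomorphic to $\mathrm{ncS}(A(K))=\bigsqcup_n\mathrm{UCP}(A(K),M_n(\mathbb{R}))$ via $k\mapsto(f\mapsto f(k))$. *)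

theory Defs
  imports "HOL-Analysis.Analysis"
begin

text \<open>An m x n matrix with entries in 'a is a function nat => nat => 'a vanishing
  outside the index box {0..<m} x {0..<n}.\<close>

definition mat_sz :: "nat \<Rightarrow> nat \<Rightarrow> (nat \<Rightarrow> nat \<Rightarrow> 'a::zero) set" where
  "mat_sz m n = {X. \<forall>i j. (m \<le> i \<or> n \<le> j) \<longrightarrow> X i j = 0}"

definition mtr :: "(nat \<Rightarrow> nat \<Rightarrow> 'a) \<Rightarrow> (nat \<Rightarrow> nat \<Rightarrow> 'a)" where
  "mtr X = (\<lambda>i j. X j i)"

definition id_mat :: "nat \<Rightarrow> (nat \<Rightarrow> nat \<Rightarrow> real)" where
  "id_mat n = (\<lambda>i j. if i < n \<and> j = i then 1 else 0)"

definition real_isometry :: "nat \<Rightarrow> nat \<Rightarrow> (nat \<Rightarrow> nat \<Rightarrow> real) \<Rightarrow> bool" where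
  "real_isometry n m \<beta> \<longleftrightarrow> \<beta> \<in> mat_sz n m \<and>
     (\<forall>j<m. \<forall>k<m. (\<Sum>i<n. \<beta> i j * \<beta> i k) = (if j = k then 1 else 0))"

definition mconj :: "nat \<Rightarrow> nat \<Rightarrow> (nat \<Rightarrow> nat \<Rightarrow> real) \<Rightarrow> (nat \<Rightarrow> nat \<Rightarrow> 'a::real_vector)
    \<Rightarrow> (nat \<Rightarrow> nat \<Rightarrow> 'a)" where
  "mconj n p \<alpha> X = (\<lambda>i j. if i < n \<and> j < n
      then (\<Sum>c<p. \<Sum>d<p. (\<alpha> i c * \<alpha> j d) *\<^sub>R X c d) else 0)"

definition msum :: "nat \<Rightarrow> (nat \<Rightarrow> nat \<Rightarrow> nat \<Rightarrow> 'a::comm_monoid_add) \<Rightarrow> (nat \<Rightarrow> nat \<Rightarrow> 'a)" where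
  "msum p M = (\<lambda>i j. \<Sum>k<p. M k i j)"

text \<open>E is the dual of a real Banach space F (the predual operator space); elements of
  M_n(E) are zero-padded matrices of bounded functionals on F.\<close>

type_synonym 'f emat = "nat \<Rightarrow> nat \<Rightarrow> ('f \<Rightarrow>\<^sub>L real)"

definition weakstar_top :: "('f::real_normed_vector) emat topology" where
  "weakstar_top = pullback_topology UNIV
      (\<lambda>X (t :: nat \<times> nat \<times> 'f). blinfun_apply (X (fst t) (fst (snd t))) (snd (snd t))) euclidean"

definition nc_dir_sum_hyp :: "(nat \<Rightarrow> 'a set) \<Rightarrow> nat \<Rightarrow> nat \<Rightarrow> (nat \<Rightarrow> nat)
    \<Rightarrow> (nat \<Rightarrow> nat \<Rightarrow> nat \<Rightarrow> real) \<Rightarrow> (nat \<Rightarrow> 'a) \<Rightarrow> bool" where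
  "nc_dir_sum_hyp K n p ns \<alpha> xs \<longleftrightarrow> 1 \<le> n \<and>
     (\<forall>i<p. 1 \<le> ns i \<and> xs i \<in> K (ns i) \<and> real_isometry n (ns i) (\<alpha> i)) \<and>
     msum p (\<lambda>i. (\<lambda>a b. \<Sum>c<ns i. \<alpha> i a c * \<alpha> i b c)) = id_mat n"

definition real_compact_nc_convex :: "(nat \<Rightarrow> ('f::banach) emat set) \<Rightarrow> bool" where
  "real_compact_nc_convex K \<longleftrightarrow>
     (\<forall>n\<ge>1. K n \<subseteq> mat_sz n n) \<and>
     (\<forall>n\<ge>1. compactin weakstar_top (K n)) \<and>
     (\<forall>n p ns \<alpha> xs. nc_dir_sum_hyp K n p ns \<alpha> xs \<longrightarrow>
        msum p (\<lambda>i. mconj n (ns i) (\<alpha> i) (xs i)) \<in> K n) \<and>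
     (\<forall>n m \<beta> x. 1 \<le> n \<and> 1 \<le> m \<and> x \<in> K n \<and> real_isometry n m \<beta> \<longrightarrow>
        mconj m n (mtr \<beta>) x \<in> K m)"

definition symmetric_nc :: "(nat \<Rightarrow> ('f::banach) emat set) \<Rightarrow> bool" where
  "symmetric_nc K \<longleftrightarrow> (\<forall>n\<ge>1. \<forall>k\<in>K n. mtr k = k)"

text \<open>A(K): continuous nc affine maps K -> disjoint union of the M_n(R), given
  level-wise as f n : M_n(E) -> M_n(R) (only values on K n matter).\<close>
definition ncA :: "(nat \<Rightarrow> ('f::banach) emat set)
    \<Rightarrow> (nat \<Rightarrow> 'f emat \<Rightarrow> (nat \<Rightarrow> nat \<Rightarrow> real)) set" where
  "ncA K = {f.
     (\<forall>n\<ge>1. \<forall>x\<in>K n. f n x \<in> mat_sz n n) \<and>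
     (\<forall>n\<ge>1. continuous_map (subtopology weakstar_top (K n)) euclidean (f n)) \<and>
     (\<forall>n p ns \<alpha> xs. nc_dir_sum_hyp K n p ns \<alpha> xs \<longrightarrow>
        f n (msum p (\<lambda>i. mconj n (ns i) (\<alpha> i) (xs i)))
          = msum p (\<lambda>i. mconj n (ns i) (\<alpha> i) (f (ns i) (xs i)))) \<and>
     (\<forall>n m \<beta> x. 1 \<le> n \<and> 1 \<le> m \<and> x \<in> K n \<and> real_isometry n m \<beta> \<longrightarrow>
        f m (mconj m n (mtr \<beta>) x) = mconj m n (mtr \<beta>) (f n x))}"

definition ncA_star :: "(nat \<Rightarrow> 'f emat \<Rightarrow> (nat \<Rightarrow> nat \<Rightarrow> real))
    \<Rightarrow> (nat \<Rightarrow> 'f emat \<Rightarrow> (nat \<Rightarrow> nat \<Rightarrow> real))" where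
  "ncA_star f = (\<lambda>n x. mtr (f n x))"

definition ncA_trivial_involution :: "(nat \<Rightarrow> ('f::banach) emat set) \<Rightarrow> bool" where
  "ncA_trivial_involution K \<longleftrightarrow>
     (\<forall>f\<in>ncA K. \<forall>n\<ge>1. \<forall>k\<in>K n. ncA_star f n k = f n k)"

definition mstar :: "('v \<Rightarrow> 'v) \<Rightarrow> (nat \<Rightarrow> nat \<Rightarrow> 'v) \<Rightarrow> (nat \<Rightarrow> nat \<Rightarrow> 'v)" where
  "mstar s X = (\<lambda>i j. s (X j i))"

definition diag_unit :: "nat \<Rightarrow> 'v::zero \<Rightarrow> (nat \<Rightarrow> nat \<Rightarrow> 'v)" where
  "diag_unit n e = (\<lambda>i j. if i < n \<and> j = i then e else 0)"

definition herm :: "('v::real_vector \<Rightarrow> 'v) \<Rightarrow> nat \<Rightarrow> (nat \<Rightarrow> nat \<Rightarrow> 'v) set" where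
  "herm s n = {X \<in> mat_sz n n. mstar s X = X}"

definition real_operator_system ::
    "('v::real_vector \<Rightarrow> 'v) \<Rightarrow> (nat \<Rightarrow> (nat \<Rightarrow> nat \<Rightarrow> 'v) set) \<Rightarrow> 'v \<Rightarrow> bool" where
  "real_operator_system s C e \<longleftrightarrow>
     linear s \<and> (\<forall>v. s (s v) = v) \<and>
     (\<forall>n\<ge>1. C n \<subseteq> herm s n) \<and>
     (\<forall>n\<ge>1. \<forall>X\<in>C n. \<forall>Y\<in>C n. (\<lambda>i j. X i j + Y i j) \<in> C n) \<and>
     (\<forall>n\<ge>1. \<forall>X\<in>C n. \<forall>r::real. 0 \<le> r \<longrightarrow> (\<lambda>i j. r *\<^sub>R X i j) \<in> C n) \<and>
     (\<forall>n\<ge>1. \<forall>X\<in>C n. (\<lambda>i j. - X i j) \<in> C n \<longrightarrow> X = (\<lambda>i j. 0)) \<and>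
     (\<forall>m n \<alpha> X. 1 \<le> m \<and> 1 \<le> n \<and> \<alpha> \<in> mat_sz m n \<and> X \<in> C n \<longrightarrow> mconj m n \<alpha> X \<in> C m) \<and>
     s e = e \<and>
     (\<forall>n\<ge>1. \<forall>X\<in>herm s n. \<exists>r>0. (\<lambda>i j. r *\<^sub>R diag_unit n e i j + X i j) \<in> C n) \<and>
     (\<forall>n\<ge>1. \<forall>X\<in>herm s n.
        (\<forall>r>0. (\<lambda>i j. r *\<^sub>R diag_unit n e i j + X i j) \<in> C n) \<longrightarrow> X \<in> C n)"

definition real_psd :: "nat \<Rightarrow> (nat \<Rightarrow> nat \<Rightarrow> real) \<Rightarrow> bool" where
  "real_psd k A \<longleftrightarrow> (\<forall>a<k. \<forall>b<k. A a b = A b a) \<and>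
     (\<forall>\<xi>::nat \<Rightarrow> real. 0 \<le> (\<Sum>a<k. \<Sum>b<k. \<xi> a * A a b * \<xi> b))"

text \<open>Unital completely positive maps V -> M_n(R).  The amplification of phi to
  M_m(V) sends X to the mn x mn block matrix [phi(X_ij)], indexed by (i*n+a, j*n+b).\<close>
definition ucp ::
    "('v::real_vector \<Rightarrow> 'v) \<Rightarrow> (nat \<Rightarrow> (nat \<Rightarrow> nat \<Rightarrow> 'v) set) \<Rightarrow> 'v \<Rightarrow> nat
      \<Rightarrow> ('v \<Rightarrow> (nat \<Rightarrow> nat \<Rightarrow> real)) \<Rightarrow> bool" where
  "ucp s C e n \<phi> \<longleftrightarrow>
     (\<forall>v. \<phi> v \<in> mat_sz n n) \<and>
     (\<forall>a b u v. \<phi> (a *\<^sub>R u + b *\<^sub>R v) = (\<lambda>i j. a * \<phi> u i j + b * \<phi> v i j)) \<and>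
     \<phi> e = id_mat n \<and>
     (\<forall>m\<ge>1. \<forall>X\<in>C m. real_psd (m * n)
        (\<lambda>p q. \<phi> (X (p div n) (q div n)) (p mod n) (q mod n)))"

end

theory Submission
  imports Defs
begin

definition goodG :: "'w::real_vector set \<Rightarrow> 'w \<Rightarrow> ('w \<times> real) set \<Rightarrow> bool" where
  "goodG P u G \<longleftrightarrow> (u, 1) \<in> G \<and>
     (\<forall>x a z b c d. (x,a) \<in> G \<longrightarrow> (z,b) \<in> G \<longrightarrow> (c *\<^sub>R x + d *\<^sub>R z, c*a + d*b) \<in> G) \<and>
     (\<forall>x a. (x,a) \<in> G \<longrightarrow> x \<in> P \<longrightarrow> 0 \<le> a)"

locale cone_unit =
  fixes P :: "'w::real_vector set" and u :: 'w
  assumes addP: "\<And>x z. x \<in> P \<Longrightarrow> z \<in> P \<Longrightarrow> x + z \<in> P"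
    and scP: "\<And>x r. x \<in> P \<Longrightarrow> 0 \<le> r \<Longrightarrow> r *\<^sub>R x \<in> P"
    and unitP: "\<And>x. \<exists>r>0. r *\<^sub>R u + x \<in> P"
begin

lemma u_in: "u \<in> P"
proof -
  obtain r where r: "r > 0" "r *\<^sub>R u + 0 \<in> P" using unitP by blast
  then have "(1/r) *\<^sub>R (r *\<^sub>R u) \<in> P" using scP[of "r *\<^sub>R u" "1/r"] r(1) by simp
  moreover have "(1/r) *\<^sub>R (r *\<^sub>R u) = u" using r(1) by simp
  ultimately show ?thesis by simp
qed

lemma zero_in: "0 \<in> P" using scP[OF u_in, of 0] by simp

lemma G_comb: "goodG P u G \<Longrightarrow> (x,a) \<in> G \<Longrightarrow> (z,b) \<in> G \<Longrightarrow> (c *\<^sub>R x + d *\<^sub>R z, c*a + d*b) \<in> G"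
  unfolding goodG_def by blast

lemma G_pos: "goodG P u G \<Longrightarrow> (x,a) \<in> G \<Longrightarrow> x \<in> P \<Longrightarrow> 0 \<le> a"
  unfolding goodG_def by blast

lemma G_u: "goodG P u G \<Longrightarrow> (u,1) \<in> G"
  unfolding goodG_def by blast

lemma G_scale: "goodG P u G \<Longrightarrow> (x,a) \<in> G \<Longrightarrow> (c *\<^sub>R x, c*a) \<in> G"
  using G_comb[of G x a x a c 0] by simp

lemma G_diff: "goodG P u G \<Longrightarrow> (x,a) \<in> G \<Longrightarrow> (z,b) \<in> G \<Longrightarrow> (x - z, a - b) \<in> G"
  using G_comb[of G x a z b 1 "-1"] by simp

lemma G_add: "goodG P u G \<Longrightarrow> (x,a) \<in> G \<Longrightarrow> (z,b) \<in> G \<Longrightarrow> (x + z, a + b) \<in> G"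
  using G_comb[of G x a z b 1 1] by simp

lemma G_fun: assumes "goodG P u G" "(x,a) \<in> G" "(x,b) \<in> G" shows "a = b"
proof -
  have "(0, a - b) \<in> G" "(0, b - a) \<in> G" using G_diff[OF assms(1,2,3)] G_diff[OF assms(1,3,2)] by auto
  then have "0 \<le> a - b" "0 \<le> b - a" using G_pos[OF assms(1)] zero_in by blast+
  then show ?thesis by simp
qed

lemma one_step:
  fixes x0 :: 'w
  assumes g: "goodG P u G"
  defines "c \<equiv> Sup {a. \<exists>x. (x,a) \<in> G \<and> x0 - x \<in> P}"
  shows "goodG P u {(x + t *\<^sub>R x0, a + t * c) | x a t. (x,a) \<in> G}"
proof -
  let ?L = "{a. \<exists>x. (x,a) \<in> G \<and> x0 - x \<in> P}"
  obtain r where r: "r > 0" "r *\<^sub>R u + x0 \<in> P" using unitP by blast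
  have "(-r *\<^sub>R u, -r * 1) \<in> G" using G_scale[OF g G_u[OF g]] by blast
  moreover have "x0 - (-r *\<^sub>R u) \<in> P" using r by (simp add: add.commute)
  ultimately have "-r * 1 \<in> ?L" by blast
  then have ne: "?L \<noteq> {}" by blast
  obtain r' where r': "r' > 0" "r' *\<^sub>R u + (- x0) \<in> P" using unitP by blast
  have bdd: "bdd_above ?L"
  proof (rule bdd_aboveI)
    fix a assume "a \<in> ?L"
    then obtain x where x: "(x,a) \<in> G" "x0 - x \<in> P" by auto
    have "(r' *\<^sub>R u - x, r' * 1 - a) \<in> G" using G_diff[OF g G_scale[OF g G_u[OF g]] x(1)] by blast
    moreover have "r' *\<^sub>R u - x \<in> P" using addP[OF r'(2) x(2)] by (simp add: algebra_simps)
    ultimately have "0 \<le> r' - a" using G_pos[OF g] by force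
    then show "a \<le> r'" by simp
  qed
  let ?G = "{(x + t *\<^sub>R x0, a + t * c) | x a t. (x,a) \<in> G}"
  have "(u,1) \<in> ?G" using G_u[OF g] by force
  moreover have "\<forall>x a z b c' d. (x,a) \<in> ?G \<longrightarrow> (z,b) \<in> ?G \<longrightarrow> (c' *\<^sub>R x + d *\<^sub>R z, c'*a + d*b) \<in> ?G"
  proof (intro allI impI)
    fix x a z b c' d assume "(x,a) \<in> ?G" "(z,b) \<in> ?G"
    then obtain x1 a1 t1 x2 a2 t2 where h: "x = x1 + t1 *\<^sub>R x0" "a = a1 + t1 * c" "(x1,a1) \<in> G"
      "z = x2 + t2 *\<^sub>R x0" "b = a2 + t2 * c" "(x2,a2) \<in> G" by blast
    have "(c' *\<^sub>R x1 + d *\<^sub>R x2, c' * a1 + d * a2) \<in> G" using G_comb[OF g h(3) h(6)] .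
    moreover have "c' *\<^sub>R x + d *\<^sub>R z = (c' *\<^sub>R x1 + d *\<^sub>R x2) + (c' * t1 + d * t2) *\<^sub>R x0"
      using h by (simp add: algebra_simps)
    moreover have "c'*a + d*b = (c' * a1 + d * a2) + (c' * t1 + d * t2) * c"
      using h by (simp add: algebra_simps)
    ultimately show "(c' *\<^sub>R x + d *\<^sub>R z, c'*a + d*b) \<in> ?G" by blast
  qed
  moreover have "\<forall>x a. (x,a) \<in> ?G \<longrightarrow> x \<in> P \<longrightarrow> 0 \<le> a"
  proof (intro allI impI)
    fix y b assume "(y,b) \<in> ?G" and yP: "y \<in> P"
    then obtain x a t where h: "y = x + t *\<^sub>R x0" "b = a + t * c" "(x,a) \<in> G" by blast
    consider "t = 0" | "t > 0" | "t < 0" by linarith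
    then show "0 \<le> b"
    proof cases
      case 1 then show ?thesis using h yP G_pos[OF g] by auto
    next
      case 2
      have "(-(1/t) *\<^sub>R x, -(1/t) * a) \<in> G" using G_scale[OF g h(3)] .
      moreover have "x0 - (-(1/t) *\<^sub>R x) = (1/t) *\<^sub>R y" using 2 h(1) by (simp add: algebra_simps)
      moreover have "(1/t) *\<^sub>R y \<in> P" using scP[OF yP] 2 by simp
      ultimately have "-(1/t) * a \<in> ?L" by force
      then have "-(1/t) * a \<le> c" unfolding c_def using bdd by (simp add: cSup_upper)
      then have "t * (-(1/t) * a) \<le> t * c" using 2 by (intro mult_left_mono) auto
      moreover have "t * (-(1/t) * a) = - a" using 2 by simp
      ultimately show ?thesis using 2 h(2) by simp
    next
      case 3
      define mm where "mm = -t"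
      have m: "mm > 0" using 3 mm_def by simp
      have tm: "t = - mm" using mm_def by simp
      have "(1/mm) *\<^sub>R y \<in> P" using scP[OF yP, of "1/mm"] m by simp
      moreover have "(1/mm) *\<^sub>R y = (1/mm) *\<^sub>R x - x0"
      proof -
        have "y = x - mm *\<^sub>R x0" using h(1) tm by simp
        then have "(1/mm) *\<^sub>R y = (1/mm) *\<^sub>R x - ((1/mm) * mm) *\<^sub>R x0" by (simp add: scaleR_diff_right)
        then show ?thesis using m by simp
      qed
      ultimately have yx: "(1/mm) *\<^sub>R x - x0 \<in> P" by simp
      have "c \<le> (1/mm) * a" unfolding c_def
      proof (rule cSup_least[OF ne])
        fix a' assume "a' \<in> ?L"
        then obtain z where z: "(z,a') \<in> G" "x0 - z \<in> P" by auto
        have "((1/mm) *\<^sub>R x - z, (1/mm) * a - a') \<in> G" using G_diff[OF g G_scale[OF g h(3)] z(1)] .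
        moreover have "(1/mm) *\<^sub>R x - z \<in> P" using addP[OF yx z(2)] by (simp add: algebra_simps)
        ultimately show "a' \<le> (1/mm) * a" using G_pos[OF g] by force
      qed
      then have "mm * c \<le> mm * ((1/mm) * a)" using m by (intro mult_left_mono) auto
      moreover have "mm * ((1/mm) * a) = a" using m by simp
      ultimately show ?thesis using m h(2) tm by simp
    qed
  qed
  ultimately show ?thesis unfolding goodG_def by blast
qed

lemma neg_u:
  assumes y: "y \<notin> P" and t: "t *\<^sub>R u \<in> P" shows "0 \<le> t"
proof (rule ccontr)
  assume "\<not> 0 \<le> t"
  then have t0: "t < 0" by simp
  have "(-1/t) *\<^sub>R (t *\<^sub>R u) \<in> P" using scP[OF t, of "-1/t"] t0 by simp
  moreover have "(-1/t) *\<^sub>R (t *\<^sub>R u) = - u" using t0 by simp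
  ultimately have mu: "- u \<in> P" by simp
  obtain r where r: "r > 0" "r *\<^sub>R u + y \<in> P" using unitP by blast
  have "(r *\<^sub>R u + y) + r *\<^sub>R (- u) \<in> P" by (rule addP[OF r(2) scP[OF mu]]) (use r(1) in linarith)
  moreover have "(r *\<^sub>R u + y) + r *\<^sub>R (- u) = y" by simp
  ultimately show False using y by simp
qed

lemma riesz:
  assumes arch: "\<And>x. (\<forall>r>0. r *\<^sub>R u + x \<in> P) \<Longrightarrow> x \<in> P" and y: "y \<notin> P"
  shows "\<exists>\<omega>::'w \<Rightarrow> real. linear \<omega> \<and> (\<forall>x\<in>P. 0 \<le> \<omega> x) \<and> \<omega> u = 1 \<and> \<omega> y < 0"
proof -
  obtain r where r: "r > 0" "r *\<^sub>R u + y \<notin> P" using arch y by blast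
  define M0 where "M0 = {(t *\<^sub>R u, t) | t. True}"
  have g0: "goodG P u M0"
    unfolding goodG_def M0_def
  proof (intro conjI allI impI)
    show "(u, 1) \<in> {(t *\<^sub>R u, t) | t. True}" by (rule CollectI, rule exI[of _ 1]) simp
  next
    fix x a z b c d
    assume "(x, a) \<in> {(t *\<^sub>R u, t) | t. True}" "(z, b) \<in> {(t *\<^sub>R u, t) | t. True}"
    then have "x = a *\<^sub>R u" "z = b *\<^sub>R u" by auto
    then have "c *\<^sub>R x + d *\<^sub>R z = (c*a + d*b) *\<^sub>R u" by (simp add: algebra_simps)
    then show "(c *\<^sub>R x + d *\<^sub>R z, c * a + d * b) \<in> {(t *\<^sub>R u, t) | t. True}" by auto
  next
    fix x a assume "(x, a) \<in> {(t *\<^sub>R u, t) | t. True}" "x \<in> P"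
    then show "0 \<le> a" using neg_u[OF y] by auto
  qed
  define c0 where "c0 = Sup {a. \<exists>x. (x,a) \<in> M0 \<and> y - x \<in> P}"
  define M1 where "M1 = {(x + t *\<^sub>R y, a + t * c0) | x a t. (x,a) \<in> M0}"
  have g1: "goodG P u M1" unfolding M1_def c0_def by (rule one_step[OF g0])
  have yM1: "(y, c0) \<in> M1" unfolding M1_def M0_def
    by (rule CollectI, rule exI[of _ 0], rule exI[of _ 0], rule exI[of _ 1]) simp
  have c0r: "c0 \<le> -r" unfolding c0_def
  proof (rule cSup_least)
    obtain r'' where r'': "r'' > 0" "r'' *\<^sub>R u + y \<in> P" using unitP by blast
    have "((-r'') *\<^sub>R u, -r'') \<in> M0" unfolding M0_def by blast
    moreover have "y - (-r'') *\<^sub>R u \<in> P" using r'' by (simp add: add.commute)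
    ultimately show "{a. \<exists>x. (x,a) \<in> M0 \<and> y - x \<in> P} \<noteq> {}" by blast
  next
    fix a assume "a \<in> {a. \<exists>x. (x,a) \<in> M0 \<and> y - x \<in> P}"
    then have ya: "y - a *\<^sub>R u \<in> P" unfolding M0_def by auto
    show "a \<le> -r"
    proof (rule ccontr)
      assume "\<not> a \<le> -r"
      then have "0 \<le> a + r" by simp
      then have "(y - a *\<^sub>R u) + (a + r) *\<^sub>R u \<in> P" using addP[OF ya scP[OF u_in]] by simp
      moreover have "(y - a *\<^sub>R u) + (a + r) *\<^sub>R u = r *\<^sub>R u + y" by (simp add: algebra_simps)
      ultimately show False using r(2) by simp
    qed
  qed
  define A where "A = {G. goodG P u G \<and> M1 \<subseteq> G}"
  have "\<forall>C\<in>chains A. \<exists>U\<in>A. \<forall>X\<in>C. X \<subseteq> U"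
  proof
    fix C assume C: "C \<in> chains A"
    show "\<exists>U\<in>A. \<forall>X\<in>C. X \<subseteq> U"
    proof (cases "C = {}")
      case True
      then show ?thesis using g1 unfolding A_def by auto
    next
      case False
      have CA: "C \<subseteq> A" and ch: "\<And>X Y. X \<in> C \<Longrightarrow> Y \<in> C \<Longrightarrow> X \<subseteq> Y \<or> Y \<subseteq> X"
        using C unfolding chains_def chain_subset_def by auto
      have "goodG P u (\<Union>C)" unfolding goodG_def
      proof (intro conjI allI impI)
        obtain X where "X \<in> C" using False by auto
        then show "(u,1) \<in> \<Union>C" using CA G_u unfolding A_def by blast
      next
        fix x a z b c d assume "(x,a) \<in> \<Union>C" "(z,b) \<in> \<Union>C"
        then obtain X Z where XZ: "X \<in> C" "Z \<in> C" "(x,a) \<in> X" "(z,b) \<in> Z" by auto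
        from ch[OF XZ(1,2)] show "(c *\<^sub>R x + d *\<^sub>R z, c * a + d * b) \<in> \<Union>C"
        proof
          assume "X \<subseteq> Z"
          then have "(c *\<^sub>R x + d *\<^sub>R z, c * a + d * b) \<in> Z"
            using G_comb[of Z x a z b c d] XZ CA unfolding A_def by blast
          then show ?thesis using XZ by blast
        next
          assume "Z \<subseteq> X"
          then have "(c *\<^sub>R x + d *\<^sub>R z, c * a + d * b) \<in> X"
            using G_comb[of X x a z b c d] XZ CA unfolding A_def by blast
          then show ?thesis using XZ by blast
        qed
      next
        fix x a assume "(x,a) \<in> \<Union>C" "x \<in> P"
        then show "0 \<le> a" using CA G_pos unfolding A_def by blast
      qed
      moreover have "M1 \<subseteq> \<Union>C" using False CA unfolding A_def by blast
      ultimately show ?thesis unfolding A_def by blast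
    qed
  qed
  from Zorn_Lemma2[OF this] obtain M where MA: "M \<in> A" and Mmax: "\<forall>X\<in>A. M \<subseteq> X \<longrightarrow> X = M" by blast
  have gM: "goodG P u M" and M1M: "M1 \<subseteq> M" using MA unfolding A_def by auto
  have tot: "\<exists>a. (x0, a) \<in> M" for x0
  proof -
    define c where "c = Sup {a. \<exists>x. (x,a) \<in> M \<and> x0 - x \<in> P}"
    define G' where "G' = {(x + t *\<^sub>R x0, a + t * c) | x a t. (x,a) \<in> M}"
    have gG': "goodG P u G'" unfolding G'_def c_def by (rule one_step[OF gM])
    have "M \<subseteq> G'"
    proof (safe)
      fix a b assume "(a,b) \<in> M"
      then have "(a + 0 *\<^sub>R x0, b + 0 * c) \<in> G'" unfolding G'_def by blast
      then show "(a,b) \<in> G'" by simp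
    qed
    then have "G' = M" using Mmax gG' M1M unfolding A_def by blast
    moreover have "(0, 0) \<in> M" using G_scale[OF gM G_u[OF gM], of 0] by simp
    then have "(x0, c) \<in> G'" unfolding G'_def
      by (rule_tac CollectI, rule_tac exI[of _ 0], rule_tac exI[of _ 0], rule_tac exI[of _ 1]) simp
    ultimately show ?thesis by blast
  qed
  define \<omega> where "\<omega> x = (THE a. (x,a) \<in> M)" for x
  have om: "(x, a) \<in> M \<Longrightarrow> \<omega> x = a" for x a
    unfolding \<omega>_def using G_fun[OF gM] by blast
  have omin: "(x, \<omega> x) \<in> M" for x using tot[of x] om by blast
  have "linear \<omega>"
  proof (rule linearI)
    fix b1 b2 show "\<omega> (b1 + b2) = \<omega> b1 + \<omega> b2" using om[OF G_add[OF gM omin omin]] .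
  next
    fix r b show "\<omega> (r *\<^sub>R b) = r *\<^sub>R \<omega> b" using om[OF G_scale[OF gM omin]] by simp
  qed
  moreover have "\<forall>x\<in>P. 0 \<le> \<omega> x" using G_pos[OF gM omin] by blast
  moreover have "\<omega> u = 1" using om[OF G_u[OF gM]] .
  moreover have "\<omega> y < 0" using om[of y c0] yM1 M1M c0r r(1) by auto
  ultimately show ?thesis by blast
qed

end

definition Qm :: "nat \<Rightarrow> nat \<Rightarrow> real" where
  "Qm = (\<lambda>a b. if a = 0 \<and> b = 1 then 1 else if a = 1 \<and> b = 0 then -1 else 0)"

definition \<alpha>d :: "nat \<Rightarrow> nat \<Rightarrow> nat \<Rightarrow> real" where
  "\<alpha>d i = (\<lambda>a c. if c < 2 \<and> a = c + 2 * i then 1 else 0)"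

definition hh :: real where "hh = sqrt (1/2)"

definition \<beta>h :: "nat \<Rightarrow> nat \<Rightarrow> real" where
  "\<beta>h = (\<lambda>c a. if a < 2 \<and> c < 4 \<and> (c = a \<or> c = a + 2) then hh else 0)"

definition ev :: "nat \<Rightarrow> nat \<Rightarrow> nat \<Rightarrow> real" where
  "ev i = (\<lambda>a c. if c = 0 \<and> a = i then 1 else 0)"

definition sel :: "nat \<Rightarrow> nat \<Rightarrow> nat \<Rightarrow> nat \<Rightarrow> real" where
  "sel i j = (\<lambda>a c. if (c = 0 \<and> a = i) \<or> (c = 1 \<and> a = j) then 1 else 0)"

lemma hh2: "hh * hh = 1/2" unfolding hh_def by simp

lemma L1: "mconj 2 2 (mtr Qm) X = (\<lambda>a b. if a < 2 \<and> b < 2 then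
   (if a = 0 \<and> b = 0 then X 1 1 else if a = 0 \<and> b = 1 then - X 1 0
    else if a = 1 \<and> b = 0 then - X 0 1 else X 0 0) else 0)"
  by (rule ext)+ (simp add: mconj_def mtr_def Qm_def lessThan_nat_numeral)

lemma L2: "mconj 2 4 (mtr \<beta>h) (msum 2 (\<lambda>i. mconj 4 2 (\<alpha>d i) (xs i))) =
  (\<lambda>a b. if a < 2 \<and> b < 2 then (1/2) *\<^sub>R (xs 0 a b + xs 1 a b) else 0)"
proof (rule ext)+
  fix a b :: nat
  show "mconj 2 4 (mtr \<beta>h) (msum 2 (\<lambda>i. mconj 4 2 (\<alpha>d i) (xs i))) a b =
    (if a < 2 \<and> b < 2 then (1/2) *\<^sub>R (xs 0 a b + xs 1 a b) else 0)"
  proof (cases "a < 2 \<and> b < 2")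
    case True
    then have "a = 0 \<or> a = 1" "b = 0 \<or> b = 1" by auto
    then show ?thesis
      by (auto simp add: mconj_def mtr_def \<beta>h_def \<alpha>d_def msum_def lessThan_nat_numeral hh2
            scaleR_add_right[symmetric])
  qed (auto simp add: mconj_def)
qed

lemma L3: "msum 2 (\<lambda>i. mconj 2 1 (ev i) X) = (\<lambda>a b. if a < 2 \<and> b < 2 \<and> a = b then X 0 0 else 0)"
  by (rule ext)+ (auto simp add: mconj_def ev_def msum_def lessThan_nat_numeral)

lemma L5: "mconj 1 2 (mtr (ev 0)) X = (\<lambda>a b. if a < 1 \<and> b < 1 then X 0 0 else 0)"
  by (rule ext)+ (auto simp add: mconj_def mtr_def ev_def lessThan_nat_numeral)

lemma sum_delta2:
  fixes X :: "nat \<Rightarrow> nat \<Rightarrow> 'a::real_vector"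
  assumes "i < n" "j < n"
  shows "(\<Sum>c<n. \<Sum>d<n. ((if c = i then 1 else 0) * (if d = j then 1 else 0)) *\<^sub>R X c d) = X i j"
proof -
  have "(\<Sum>d<n. ((if c = i then 1 else 0) * (if d = j then 1 else 0)) *\<^sub>R X c d) = (if c = i then X c j else 0)" for c
  proof (cases "c = i")
    case True
    have "(\<Sum>d<n. ((if d = j then 1 else 0)::real) *\<^sub>R X c d) = (\<Sum>d<n. if d = j then X c d else 0)"
      by (rule sum.cong) auto
    also have "\<dots> = X c j" using assms by (simp add: sum.delta')
    finally show ?thesis using True by simp
  qed simp
  then show ?thesis using assms by (simp add: sum.delta')
qed

lemma L4: assumes "i < n" "j < n" "i \<noteq> j"
  shows "mconj 2 n (mtr (sel i j)) X 0 1 = X i j" "mconj 2 n (mtr (sel i j)) X 1 0 = X j i"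
  using assms by (simp_all add: mconj_def mtr_def sel_def sum_delta2)

lemma iso_Qm: "real_isometry 2 2 Qm"
  by (auto simp add: real_isometry_def mat_sz_def Qm_def lessThan_nat_numeral)
lemma iso_\<alpha>d: "i < 2 \<Longrightarrow> real_isometry 4 2 (\<alpha>d i)"
  by (auto simp add: real_isometry_def mat_sz_def \<alpha>d_def lessThan_nat_numeral)
lemma iso_\<beta>h: "real_isometry 4 2 \<beta>h"
  by (auto simp add: real_isometry_def mat_sz_def \<beta>h_def lessThan_nat_numeral hh2)
lemma iso_ev: "i < 2 \<Longrightarrow> real_isometry 2 1 (ev i)"
  by (auto simp add: real_isometry_def mat_sz_def ev_def lessThan_nat_numeral)
lemma iso_sel: "i < n \<Longrightarrow> j < n \<Longrightarrow> i \<noteq> j \<Longrightarrow> real_isometry n 2 (sel i j)"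
proof -
  assume a: "i < n" "j < n" "i \<noteq> j"
  have "(\<Sum>ia<n. sel i j ia c * sel i j ia d) = (if c = d then 1 else 0)" if "c < 2" "d < 2" for c d
  proof -
    have "c = 0 \<or> c = 1" "d = 0 \<or> d = 1" using that by auto
    then show ?thesis using a
      by (elim disjE) (simp_all add: sel_def mult_if_delta sum.delta' if_distrib[of "\<lambda>x. x * _"] cong: if_cong)
  qed
  then show ?thesis using a by (auto simp add: real_isometry_def mat_sz_def sel_def)
qed
lemma sum_\<alpha>d: "msum 2 (\<lambda>i. (\<lambda>a b. \<Sum>c<2. \<alpha>d i a c * \<alpha>d i b c)) = id_mat 4"
  by (rule ext)+ (auto simp add: msum_def id_mat_def \<alpha>d_def lessThan_nat_numeral)
lemma sum_ev: "msum 2 (\<lambda>i. (\<lambda>a b. \<Sum>c<1. ev i a c * ev i b c)) = id_mat 2"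
  by (rule ext)+ (auto simp add: msum_def id_mat_def ev_def lessThan_nat_numeral)

lemma lvl2:
  fixes K :: "nat \<Rightarrow> ('f::banach) emat set"
  assumes K: "real_compact_nc_convex K" and sym: "symmetric_nc K" and f: "f \<in> ncA K"
    and y: "y \<in> K 2"
  shows "f 2 y 0 1 = f 2 y 1 0"
proof -
  have Kdir: "\<And>n p ns \<alpha> xs. nc_dir_sum_hyp K n p ns \<alpha> xs \<Longrightarrow> msum p (\<lambda>i. mconj n (ns i) (\<alpha> i) (xs i)) \<in> K n"
    and Kcomp: "\<And>n m \<beta> x. 1 \<le> n \<Longrightarrow> 1 \<le> m \<Longrightarrow> x \<in> K n \<Longrightarrow> real_isometry n m \<beta> \<Longrightarrow> mconj m n (mtr \<beta>) x \<in> K m"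
    using K unfolding real_compact_nc_convex_def by blast+
  have fdir: "\<And>n p ns \<alpha> xs. nc_dir_sum_hyp K n p ns \<alpha> xs \<Longrightarrow>
        f n (msum p (\<lambda>i. mconj n (ns i) (\<alpha> i) (xs i))) = msum p (\<lambda>i. mconj n (ns i) (\<alpha> i) (f (ns i) (xs i)))"
    and fcomp: "\<And>n m \<beta> x. 1 \<le> n \<Longrightarrow> 1 \<le> m \<Longrightarrow> x \<in> K n \<Longrightarrow> real_isometry n m \<beta> \<Longrightarrow>
        f m (mconj m n (mtr \<beta>) x) = mconj m n (mtr \<beta>) (f n x)"
    using f unfolding ncA_def by blast+
  have ysym: "y 1 0 = y 0 1" using sym y unfolding symmetric_nc_def mtr_def by (metis one_le_numeral)
  define y' where "y' = mconj 2 2 (mtr Qm) y"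
  have y'K: "y' \<in> K 2" unfolding y'_def by (rule Kcomp) (auto simp: y iso_Qm)
  define xs where "xs = (\<lambda>i::nat. if i = 0 then y else y')"
  have h1: "nc_dir_sum_hyp K 4 2 (\<lambda>_. 2) \<alpha>d xs"
    unfolding nc_dir_sum_hyp_def using sum_\<alpha>d iso_\<alpha>d y y'K by (auto simp: xs_def)
  define z where "z = msum 2 (\<lambda>i. mconj 4 2 (\<alpha>d i) (xs i))"
  have zK: "z \<in> K 4" unfolding z_def using Kdir[OF h1] .
  define w where "w = mconj 2 4 (mtr \<beta>h) z"
  have wK: "w \<in> K 2" unfolding w_def by (rule Kcomp) (auto simp: zK iso_\<beta>h)
  define m1 where "m1 = mconj 1 2 (mtr (ev 0)) w"
  have m1K: "m1 \<in> K 1" unfolding m1_def by (rule Kcomp) (auto simp: wK iso_ev[of 0, simplified])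
  have h2: "nc_dir_sum_hyp K 2 2 (\<lambda>_. 1) ev (\<lambda>_. m1)"
    unfolding nc_dir_sum_hyp_def using sum_ev iso_ev m1K by auto
  have wform: "w = (\<lambda>a b. if a < 2 \<and> b < 2 then (1/2) *\<^sub>R (xs 0 a b + xs 1 a b) else 0)"
    unfolding w_def z_def by (rule L2)
  have weq: "w = msum 2 (\<lambda>i. mconj 2 1 (ev i) m1)"
    unfolding L3 m1_def L5
  proof (rule ext, rule ext)
    fix a b :: nat
    show "w a b = (if a < 2 \<and> b < 2 \<and> a = b then (if 0 < (1::nat) \<and> 0 < (1::nat) then w 0 0 else 0) else 0)"
      unfolding wform xs_def y'_def L1 using ysym
      by (cases "a < 2 \<and> b < 2") (auto simp: less_2_cases_iff algebra_simps)
  qed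
  have "f 2 w = msum 2 (\<lambda>i. mconj 2 1 (ev i) (f 1 m1))" unfolding weq by (rule fdir[OF h2])
  then have e1: "f 2 w 0 1 = 0" unfolding L3 by simp
  have "f 2 w = mconj 2 4 (mtr \<beta>h) (f 4 z)" unfolding w_def by (rule fcomp) (auto simp: zK iso_\<beta>h)
  also have "\<dots> = mconj 2 4 (mtr \<beta>h) (msum 2 (\<lambda>i. mconj 4 2 (\<alpha>d i) (f 2 (xs i))))"
    unfolding z_def using fdir[OF h1] by simp
  also have "\<dots> = (\<lambda>a b. if a < 2 \<and> b < 2 then (1/2) *\<^sub>R (f 2 (xs 0) a b + f 2 (xs 1) a b) else 0)"
    by (rule L2)
  finally have e2: "f 2 w 0 1 = (1/2) * (f 2 y 0 1 + f 2 y' 0 1)" by (simp add: xs_def)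
  have "f 2 y' = mconj 2 2 (mtr Qm) (f 2 y)" unfolding y'_def by (rule fcomp) (auto simp: y iso_Qm)
  then have "f 2 y' 0 1 = - f 2 y 1 0" unfolding L1 by simp
  then show ?thesis using e1 e2 by simp
qed

lemma part1_sym:
  fixes K :: "nat \<Rightarrow> ('f::banach) emat set"
  assumes K: "real_compact_nc_convex K" and sym: "symmetric_nc K" and f: "f \<in> ncA K"
    and n: "1 \<le> n" and k: "k \<in> K n"
  shows "mtr (f n k) = f n k"
proof (rule ext, rule ext)
  fix i j
  have fmat: "f n k \<in> mat_sz n n" using f n k unfolding ncA_def by blast
  have fcomp: "\<And>n m \<beta> x. 1 \<le> n \<Longrightarrow> 1 \<le> m \<Longrightarrow> x \<in> K n \<Longrightarrow> real_isometry n m \<beta> \<Longrightarrow>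
        f m (mconj m n (mtr \<beta>) x) = mconj m n (mtr \<beta>) (f n x)"
    using f unfolding ncA_def by blast
  have Kcomp: "\<And>n m \<beta> x. 1 \<le> n \<Longrightarrow> 1 \<le> m \<Longrightarrow> x \<in> K n \<Longrightarrow> real_isometry n m \<beta> \<Longrightarrow> mconj m n (mtr \<beta>) x \<in> K m"
    using K unfolding real_compact_nc_convex_def by blast
  show "mtr (f n k) i j = f n k i j"
  proof (cases "i < n \<and> j < n \<and> i \<noteq> j")
    case True
    let ?y = "mconj 2 n (mtr (sel i j)) k"
    have iso: "real_isometry n 2 (sel i j)" using True iso_sel by blast
    have yK: "?y \<in> K 2" by (rule Kcomp) (use n k iso in auto)
    have fy: "f 2 ?y = mconj 2 n (mtr (sel i j)) (f n k)" by (rule fcomp) (use n k iso in auto)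
    have "f 2 ?y 0 1 = f 2 ?y 1 0" by (rule lvl2[OF K sym f yK])
    then show ?thesis unfolding fy using L4[of i n j "f n k"] True by (simp add: mtr_def)
  next
    case False
    then show ?thesis using fmat unfolding mat_sz_def mtr_def by auto
  qed
qed

definition evx :: "'f::banach \<Rightarrow> nat \<Rightarrow> 'f emat \<Rightarrow> (nat \<Rightarrow> nat \<Rightarrow> real)" where
  "evx \<xi> = (\<lambda>n x i j. blinfun_apply (x i j) \<xi>)"

lemma evx_cont: fixes \<xi> :: "'f::banach" shows "continuous_map (subtopology weakstar_top S) euclidean (evx \<xi> n)"
proof -
  define G where "G = (\<lambda>(X::'f emat) (t :: nat \<times> nat \<times> 'f). blinfun_apply (X (fst t) (fst (snd t))) (snd (snd t)))"
  define g where "g = (\<lambda>(h:: nat \<times> nat \<times> 'f \<Rightarrow> real) (i::nat) (j::nat). h (i,j,\<xi>))"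
  have "continuous_on UNIV g" unfolding g_def
    by (intro continuous_on_coordinatewise_then_product continuous_on_product_coordinates)
  then have "continuous_map euclidean euclidean g" by (simp add: continuous_map_iff_continuous)
  then have "continuous_map (pullback_topology UNIV G euclidean) euclidean (g \<circ> G)" by blast
  moreover have "g \<circ> G = evx \<xi> n" unfolding g_def G_def evx_def by (auto simp: fun_eq_iff)
  ultimately have "continuous_map weakstar_top euclidean (evx \<xi> n)" unfolding weakstar_top_def G_def by simp
  then show ?thesis by (rule continuous_map_from_subtopology)
qed

lemma evx_mconj: "evx \<xi> m (mconj m n \<alpha> x) = mconj m n \<alpha> (evx \<xi> n x)"
  by (rule ext)+ (simp add: evx_def mconj_def blinfun.sum_left blinfun.scaleR_left)

lemma evx_msum: "evx \<xi> n (msum p M) = msum p (\<lambda>i. evx \<xi> n (M i))"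
  by (rule ext)+ (simp add: evx_def msum_def blinfun.sum_left)

lemma evx_ncA:
  fixes K :: "nat \<Rightarrow> ('f::banach) emat set"
  assumes K: "real_compact_nc_convex K"
  shows "evx \<xi> \<in> ncA K"
proof -
  have Kmat: "\<And>n. 1 \<le> n \<Longrightarrow> K n \<subseteq> mat_sz n n" using K unfolding real_compact_nc_convex_def by blast
  show ?thesis unfolding ncA_def
  proof (intro CollectI conjI allI impI ballI)
    fix n x assume "1 \<le> n" "x \<in> K n"
    then show "evx \<xi> n x \<in> mat_sz n n" using Kmat unfolding mat_sz_def evx_def by fastforce
  next
    fix n :: nat show "continuous_map (subtopology weakstar_top (K n)) euclidean (evx \<xi> n)" by (rule evx_cont)
  next
    fix n p ns \<alpha> xs
    show "evx \<xi> n (msum p (\<lambda>i. mconj n (ns i) (\<alpha> i) (xs i))) = msum p (\<lambda>i. mconj n (ns i) (\<alpha> i) (evx \<xi> (ns i) (xs i)))"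
      by (simp add: evx_msum evx_mconj)
  next
    fix n m \<beta> x
    show "evx \<xi> m (mconj m n (mtr \<beta>) x) = mconj m n (mtr \<beta>) (evx \<xi> n x)" by (rule evx_mconj)
  qed
qed

lemma part1_triv:
  fixes K :: "nat \<Rightarrow> ('f::banach) emat set"
  assumes K: "real_compact_nc_convex K" and T: "ncA_trivial_involution K"
  shows "symmetric_nc K"
  unfolding symmetric_nc_def
proof (intro allI impI ballI)
  fix n k assume n: "1 \<le> n" and k: "k \<in> K n"
  show "mtr k = k"
  proof (rule ext, rule ext, rule blinfun_eqI)
    fix i j \<xi>
    have "ncA_star (evx \<xi>) n k = evx \<xi> n k" using T evx_ncA[OF K] n k unfolding ncA_trivial_involution_def by blast
    then have "ncA_star (evx \<xi>) n k i j = evx \<xi> n k i j" by simp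
    then show "blinfun_apply (mtr k i j) \<xi> = blinfun_apply (k i j) \<xi>"
      by (simp add: ncA_star_def mtr_def evx_def)
  qed
qed

definition Rm :: "('v::real_vector \<Rightarrow> 'v) \<Rightarrow> 'v \<times> 'v \<times> 'v \<Rightarrow> nat \<Rightarrow> nat \<Rightarrow> 'v" where
  "Rm s w = (\<lambda>i j. if i = 0 \<and> j = 0 then (1/2) *\<^sub>R (fst w + s (fst w))
     else if i = 0 \<and> j = 1 then fst (snd w)
     else if i = 1 \<and> j = 0 then s (fst (snd w))
     else if i = 1 \<and> j = 1 then (1/2) *\<^sub>R (snd (snd w) + s (snd (snd w))) else 0)"

definition Tw :: "('v::real_vector \<Rightarrow> 'v) \<Rightarrow> 'v \<times> 'v \<times> 'v \<Rightarrow> 'v \<times> 'v \<times> 'v" where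
  "Tw s w = (snd (snd w), - s (fst (snd w)), fst w)"

definition phi :: "('v::real_vector \<Rightarrow> 'v) \<Rightarrow> ('v \<times> 'v \<times> 'v \<Rightarrow> real) \<Rightarrow> 'v \<Rightarrow> nat \<Rightarrow> nat \<Rightarrow> real" where
  "phi s \<omega> v = (\<lambda>a b. if a = 0 \<and> b = 0 then 2 * \<omega> (v, 0, 0)
     else if a = 0 \<and> b = 1 then \<omega> (0, v, 0)
     else if a = 1 \<and> b = 0 then \<omega> (0, s v, 0)
     else if a = 1 \<and> b = 1 then 2 * \<omega> (0, 0, v) else 0)"

context
  fixes s :: "'v::real_vector \<Rightarrow> 'v"
  assumes lin: "linear s" and inv: "\<And>v. s (s v) = v"
begin

lemma s_add: "s (x + y) = s x + s y" using lin by (simp add: linear_add)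
lemma s_scale: "s (r *\<^sub>R x) = r *\<^sub>R s x" using lin by (simp add: linear_scale)
lemma s_zero: "s 0 = 0" using lin by (simp add: linear_0)
lemma s_minus: "s (- x) = - s x" using lin by (simp add: linear_neg)
lemma s_diff: "s (x - y) = s x - s y" using lin by (simp add: linear_diff)
lemma s_sum: "s (sum g A) = (\<Sum>a\<in>A. s (g a))" using lin by (simp add: linear_sum)

lemma R_add: "Rm s (x + z) = (\<lambda>i j. Rm s x i j + Rm s z i j)"
  by (rule ext)+ (simp add: Rm_def s_add algebra_simps)

lemma R_scale: "Rm s (r *\<^sub>R x) = (\<lambda>i j. r *\<^sub>R Rm s x i j)"
  by (rule ext)+ (simp add: Rm_def s_scale s_add algebra_simps)

lemma R_herm: "Rm s x \<in> herm s 2"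
  by (auto simp add: herm_def mat_sz_def mstar_def Rm_def s_add s_scale inv s_zero fun_eq_iff)

lemma R_unit: "s e = e \<Longrightarrow> (\<lambda>i j. r *\<^sub>R diag_unit 2 e i j + Rm s x i j) = Rm s (r *\<^sub>R (e, 0, e) + x)"
proof (rule ext, rule ext)
  fix i j assume se: "s e = e"
  have hl: "(1/2) *\<^sub>R ((a + b) + (a + c)) = a + (1/2) *\<^sub>R (b + c)" for a b c :: 'v
  proof -
    have "(a + b) + (a + c) = 2 *\<^sub>R a + (b + c)" by (simp add: scaleR_2 algebra_simps)
    then have "(1/2) *\<^sub>R ((a + b) + (a + c)) = (1/2) *\<^sub>R (2 *\<^sub>R a) + (1/2) *\<^sub>R (b + c)"
      by (simp only: scaleR_add_right)
    then show ?thesis by simp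
  qed
  show "r *\<^sub>R diag_unit 2 e i j + Rm s x i j = Rm s (r *\<^sub>R (e, 0, e) + x) i j"
    using se by (auto simp add: Rm_def diag_unit_def s_add s_scale hl)
qed

lemma herm_R: "Z \<in> herm s 2 \<Longrightarrow> Rm s (Z 0 0, Z 0 1, Z 1 1) = Z"
proof (rule ext, rule ext)
  fix i j assume Z: "Z \<in> herm s 2"
  then have m: "Z \<in> mat_sz 2 2" and h: "\<And>i j. s (Z j i) = Z i j"
    unfolding herm_def mstar_def by (auto simp: fun_eq_iff)
  have h00: "s (Z 0 0) = Z 0 0" "s (Z 1 1) = Z 1 1" using h by auto
  show "Rm s (Z 0 0, Z 0 1, Z 1 1) i j = Z i j"
  proof (cases "i < 2 \<and> j < 2")
    case True
    then have "i = 0 \<or> i = 1" "j = 0 \<or> j = 1" by auto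
    then show ?thesis using h00 h[of 1 0] h[of 0 1]
      by (elim disjE) (simp_all add: Rm_def scaleR_2[symmetric])
  next
    case False
    then show ?thesis using m unfolding mat_sz_def Rm_def by auto
  qed
qed

lemma R_twirl: "Rm s (Tw s w) = mconj 2 2 (mtr Qm) (Rm s w)"
  unfolding L1 by (rule ext)+ (auto simp: Rm_def Tw_def inv s_minus add.commute)

lemma lin_pair: "linear \<omega> \<Longrightarrow> linear g \<Longrightarrow> linear (\<lambda>v. \<omega> (g v))"
  using linear_compose[of g \<omega>] by (simp add: o_def)

lemma lin_p1: "linear \<omega> \<Longrightarrow> linear (\<lambda>v. \<omega> (v, 0::'v, 0::'v))"
  by (rule lin_pair) (auto intro!: linearI)
lemma lin_p2: "linear \<omega> \<Longrightarrow> linear (\<lambda>v. \<omega> (0::'v, v, 0::'v))"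
  by (rule lin_pair) (auto intro!: linearI)
lemma lin_p3: "linear \<omega> \<Longrightarrow> linear (\<lambda>v. \<omega> (0::'v, 0::'v, v))"
  by (rule lin_pair) (auto intro!: linearI)
lemma lin_p2s: "linear \<omega> \<Longrightarrow> linear (\<lambda>v. \<omega> (0::'v, s v, 0::'v))"
  by (rule lin_pair) (auto intro!: linearI simp: s_add s_scale)

lemma om3: "linear \<omega> \<Longrightarrow> \<omega> (a, b, d) = \<omega> (a, 0, 0) + \<omega> (0, b, 0) + \<omega> (0, 0, d)"
proof -
  assume l: "linear \<omega>"
  have "(a, b, d) = (a, 0, 0) + (0, b, 0) + (0, 0, d)" by simp
  then show ?thesis using l by (metis linear_add)
qed

lemma phi_lin: "linear \<omega> \<Longrightarrow> linear (\<lambda>v. phi s \<omega> v a b)"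
proof -
  assume l: "linear \<omega>"
  note L = lin_p1[OF l] lin_p2[OF l] lin_p3[OF l] lin_p2s[OF l]
  show ?thesis
  proof (rule linearI)
    fix x y show "phi s \<omega> (x + y) a b = phi s \<omega> x a b + phi s \<omega> y a b"
      unfolding phi_def by (simp add: linear_add[OF L(1)] linear_add[OF L(2)] linear_add[OF L(3)] linear_add[OF L(4)])
  next
    fix r x show "phi s \<omega> (r *\<^sub>R x) a b = r *\<^sub>R phi s \<omega> x a b"
      unfolding phi_def by (simp add: linear_scale[OF L(1)] linear_scale[OF L(2)] linear_scale[OF L(3)] linear_scale[OF L(4)])
  qed
qed

lemma reindex2: "(\<Sum>a<(m::nat)*2. g a) = (\<Sum>p<m. g (2*p) + g (2*p+1))"
proof (induction m)
  case (Suc m)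
  have "Suc m * 2 = Suc (Suc (m * 2))" by simp
  then show ?case using Suc by (simp add: mult.commute add.assoc)
qed simp

lemma phi_ucp:
  assumes ROS: "real_operator_system s C e"
    and lw: "linear \<omega>" and pos: "\<And>w. Rm s w \<in> C 2 \<Longrightarrow> 0 \<le> \<omega> w"
    and v1: "\<omega> (e,0,0) = 1/2" "\<omega> (0,e,0) = 0" "\<omega> (0,0,e) = 1/2"
  shows "ucp s C e 2 (phi s \<omega>)"
proof -
  note RD = ROS[unfolded real_operator_system_def]
  have Cherm: "\<And>n. 1 \<le> n \<Longrightarrow> C n \<subseteq> herm s n" using RD by (elim conjE) simp
  have Cmc: "\<And>m n \<alpha> X. 1 \<le> m \<Longrightarrow> 1 \<le> n \<Longrightarrow> \<alpha> \<in> mat_sz m n \<Longrightarrow> X \<in> C n \<Longrightarrow> mconj m n \<alpha> X \<in> C m"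
    using RD by (elim conjE) simp
  have se: "s e = e" using RD by (elim conjE) simp
  have Csc: "\<And>n X r. 1 \<le> n \<Longrightarrow> X \<in> C n \<Longrightarrow> 0 \<le> r \<Longrightarrow> (\<lambda>i j. r *\<^sub>R X i j) \<in> C n"
    using RD by (elim conjE) simp
  have Carch: "\<And>n X. 1 \<le> n \<Longrightarrow> X \<in> herm s n \<Longrightarrow> \<exists>r>0. (\<lambda>i j. r *\<^sub>R diag_unit n e i j + X i j) \<in> C n"
    using RD by (elim conjE) simp
  have zC: "(\<lambda>i j. 0) \<in> C 2"
  proof -
    have "(\<lambda>i j. 0::'v) \<in> herm s 2" by (simp add: herm_def mat_sz_def mstar_def s_zero)
    then obtain r where "(\<lambda>i j. r *\<^sub>R diag_unit 2 e i j + 0) \<in> C 2" using Carch[of 2] by fastforce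
    from Csc[OF _ this, of 0] show ?thesis by simp
  qed
  have fact: "\<omega> w = \<omega> w'" if "Rm s w = Rm s w'" for w w'
  proof -
    have "Rm s (w - w') = (\<lambda>i j. 0)"
      using that R_add[of w "-w'"] R_scale[of "-1" w'] by (auto simp: fun_eq_iff)
    moreover have "Rm s (w' - w) = (\<lambda>i j. 0)"
      using that R_add[of w' "-w"] R_scale[of "-1" w] by (auto simp: fun_eq_iff)
    ultimately have "0 \<le> \<omega> (w - w')" "0 \<le> \<omega> (w' - w)" using pos zC by auto
    then show ?thesis using lw by (simp add: linear_diff)
  qed
  have f1: "\<omega> (s v, 0, 0) = \<omega> (v, 0, 0)" for v
  proof (rule fact)
    have "s v + v = v + s v" by (rule add.commute)
    then show "Rm s (s v, 0, 0) = Rm s (v, 0, 0)" unfolding Rm_def by (intro ext) (simp add: inv s_zero)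
  qed
  have f3: "\<omega> (0, 0, s v) = \<omega> (0, 0, v)" for v
  proof (rule fact)
    have "s v + v = v + s v" by (rule add.commute)
    then show "Rm s (0, 0, s v) = Rm s (0, 0, v)" unfolding Rm_def by (intro ext) (simp add: inv s_zero)
  qed
  have phis: "phi s \<omega> (s v) b a = phi s \<omega> v a b" if "a < 2" "b < 2" for v a b
  proof -
    have "a = 0 \<or> a = 1" "b = 0 \<or> b = 1" using that by auto
    then show ?thesis by (elim disjE) (simp_all add: phi_def f1 f3 inv)
  qed
  show ?thesis unfolding ucp_def
  proof (intro conjI allI impI ballI)
    fix v show "phi s \<omega> v \<in> mat_sz 2 2" by (simp add: mat_sz_def phi_def)
  next
    fix a b u v
    show "phi s \<omega> (a *\<^sub>R u + b *\<^sub>R v) = (\<lambda>i j. a * phi s \<omega> u i j + b * phi s \<omega> v i j)"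
    proof (rule ext, rule ext)
      fix i j
      have l: "linear (\<lambda>v. phi s \<omega> v i j)" by (rule phi_lin[OF lw])
      show "phi s \<omega> (a *\<^sub>R u + b *\<^sub>R v) i j = a * phi s \<omega> u i j + b * phi s \<omega> v i j"
        using linear_add[OF l] linear_scale[OF l] by simp
    qed
  next
    show "phi s \<omega> e = id_mat 2"
      by (rule ext)+ (auto simp: phi_def id_mat_def v1 se)
  next
    fix m :: nat and X assume m: "1 \<le> m" and X: "X \<in> C m"
    have Xh: "X p q = s (X q p)" for p q
      using Cherm[OF m] X unfolding herm_def mstar_def by (auto simp: fun_eq_iff)
    let ?M = "\<lambda>p q. phi s \<omega> (X (p div 2) (q div 2)) (p mod 2) (q mod 2)"
    show "real_psd (m * 2) ?M"
      unfolding real_psd_def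
    proof (intro conjI allI impI)
      fix a b assume "a < m * 2" "b < m * 2"
      have "?M b a = phi s \<omega> (s (X (a div 2) (b div 2))) (b mod 2) (a mod 2)" by (simp only: Xh[of "b div 2" "a div 2"])
      also have "\<dots> = ?M a b" by (rule phis) auto
      finally show "?M a b = ?M b a" by simp
    next
      fix \<xi> :: "nat \<Rightarrow> real"
      define \<alpha> where "\<alpha> = (\<lambda>a p. if a < 2 \<and> p < m then \<xi> (2*p + a) else 0)"
      define Z where "Z = mconj 2 m \<alpha> X"
      have ZC: "Z \<in> C 2" unfolding Z_def by (rule Cmc) (use m X in \<open>auto simp: \<alpha>_def mat_sz_def\<close>)
      have Zh: "Z \<in> herm s 2" using Cherm[of 2] ZC by auto
      then have Z01: "Z 0 1 = s (Z 1 0)" unfolding herm_def mstar_def by (auto simp: fun_eq_iff)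
      have Zpos: "0 \<le> \<omega> (Z 0 0, Z 0 1, Z 1 1)" using pos herm_R[OF Zh] ZC by simp
      have Zab: "Z a b = (\<Sum>p<m. \<Sum>q<m. (\<xi> (2*p+a) * \<xi> (2*q+b)) *\<^sub>R X p q)" if "a < 2" "b < 2" for a b
        unfolding Z_def mconj_def \<alpha>_def using that by (auto intro!: sum.cong)
      have phiZ: "phi s \<omega> (Z a b) a b = (\<Sum>p<m. \<Sum>q<m. \<xi> (2*p+a) * phi s \<omega> (X p q) a b * \<xi> (2*q+b))"
        if "a < 2" "b < 2" for a b
      proof -
        have l: "linear (\<lambda>v. phi s \<omega> v a b)" by (rule phi_lin[OF lw])
        show ?thesis unfolding Zab[OF that] linear_sum[OF l] linear_scale[OF l]
          by (simp add: algebra_simps)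
      qed
      have md: "\<And>p::nat. Suc (p * 2) mod 2 = Suc 0" "\<And>p::nat. Suc (p * 2) div 2 = p" by presburger+
      have "(\<Sum>a<m * 2. \<Sum>b<m * 2. \<xi> a * ?M a b * \<xi> b) =
         (\<Sum>p<m. \<Sum>q<m. \<xi> (2*p) * phi s \<omega> (X p q) 0 0 * \<xi> (2*q)
            + \<xi> (2*p) * phi s \<omega> (X p q) 0 1 * \<xi> (2*q+1)
            + \<xi> (2*p+1) * phi s \<omega> (X p q) 1 0 * \<xi> (2*q)
            + \<xi> (2*p+1) * phi s \<omega> (X p q) 1 1 * \<xi> (2*q+1))"
        using md by (simp add: reindex2 sum.distrib algebra_simps)
      also have "\<dots> = phi s \<omega> (Z 0 0) 0 0 + phi s \<omega> (Z 0 1) 0 1 + phi s \<omega> (Z 1 0) 1 0 + phi s \<omega> (Z 1 1) 1 1"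
        by (simp add: phiZ sum.distrib)
      also have "\<dots> = 2 * \<omega> (Z 0 0, Z 0 1, Z 1 1)"
        using om3[OF lw, of "Z 0 0" "Z 0 1" "Z 1 1"] Z01 by (simp add: phi_def inv)
      finally show "0 \<le> (\<Sum>a<m * 2. \<Sum>b<m * 2. \<xi> a * ?M a b * \<xi> b)" using Zpos by simp
    qed
  qed
qed


lemma part2_back:
  assumes ROS: "real_operator_system s C e"
    and H: "\<forall>n\<ge>1. \<forall>\<phi>. ucp s C e n \<phi> \<longrightarrow> (\<forall>v. mtr (\<phi> v) = \<phi> v)"
  shows "s v = v"
proof (rule ccontr)
  assume nv: "s v \<noteq> v"
  note RD = ROS[unfolded real_operator_system_def]
  have Cherm: "\<And>n. 1 \<le> n \<Longrightarrow> C n \<subseteq> herm s n" using RD by (elim conjE) simp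
  have Cmc: "\<And>m n \<alpha> X. 1 \<le> m \<Longrightarrow> 1 \<le> n \<Longrightarrow> \<alpha> \<in> mat_sz m n \<Longrightarrow> X \<in> C n \<Longrightarrow> mconj m n \<alpha> X \<in> C m"
    using RD by (elim conjE) simp
  have se: "s e = e" using RD by (elim conjE) simp
  have Csc: "\<And>n X r. 1 \<le> n \<Longrightarrow> X \<in> C n \<Longrightarrow> 0 \<le> r \<Longrightarrow> (\<lambda>i j. r *\<^sub>R X i j) \<in> C n"
    using RD by (elim conjE) simp
  have Cadd: "\<And>n X Y. 1 \<le> n \<Longrightarrow> X \<in> C n \<Longrightarrow> Y \<in> C n \<Longrightarrow> (\<lambda>i j. X i j + Y i j) \<in> C n"
    using RD by (elim conjE) simp
  have Canti: "\<And>n X. 1 \<le> n \<Longrightarrow> X \<in> C n \<Longrightarrow> (\<lambda>i j. - X i j) \<in> C n \<Longrightarrow> X = (\<lambda>i j. 0)"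
    using RD by (elim conjE) simp
  have Carch: "\<And>n X. 1 \<le> n \<Longrightarrow> X \<in> herm s n \<Longrightarrow> \<exists>r>0. (\<lambda>i j. r *\<^sub>R diag_unit n e i j + X i j) \<in> C n"
    using RD by (elim conjE) simp
  have Carch2: "\<And>n X. 1 \<le> n \<Longrightarrow> X \<in> herm s n \<Longrightarrow> (\<forall>r>0. (\<lambda>i j. r *\<^sub>R diag_unit n e i j + X i j) \<in> C n) \<Longrightarrow> X \<in> C n"
    using RD by (elim conjE) simp
  define P where "P = {w. Rm s w \<in> C 2}"
  define u where "u = (e, 0::'v, e)"
  interpret cu: cone_unit P u
  proof
    fix x z assume "x \<in> P" "z \<in> P"
    then show "x + z \<in> P" unfolding P_def using Cadd[of 2 "Rm s x" "Rm s z"] by (simp add: R_add)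
  next
    fix x and r :: real assume "x \<in> P" "0 \<le> r"
    then show "r *\<^sub>R x \<in> P" unfolding P_def using Csc[of 2 "Rm s x" r] by (simp add: R_scale)
  next
    fix x
    obtain r where "r > 0" "(\<lambda>i j. r *\<^sub>R diag_unit 2 e i j + Rm s x i j) \<in> C 2"
      using Carch[of 2 "Rm s x"] R_herm by auto
    then show "\<exists>r>0. r *\<^sub>R u + x \<in> P" unfolding P_def u_def using R_unit[OF se] by auto
  qed
  have arch: "x \<in> P" if "\<forall>r>0. r *\<^sub>R u + x \<in> P" for x
  proof -
    have "\<forall>r>0. (\<lambda>i j. r *\<^sub>R diag_unit 2 e i j + Rm s x i j) \<in> C 2"
      using that unfolding P_def u_def using R_unit[OF se] by auto
    then show ?thesis unfolding P_def using Carch2[of 2 "Rm s x"] R_herm by auto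
  qed
  define k where "k = v - s v"
  have sk: "s k = - k" unfolding k_def by (simp add: s_diff inv)
  have k0: "k \<noteq> 0" unfolding k_def using nv by simp
  obtain y where y: "y \<notin> P" and yk: "y = (0, k, 0) \<or> y = (0, -k, 0)"
  proof (cases "(0, k, 0) \<in> P")
    case False then show ?thesis using that by blast
  next
    case True
    have "(0, -k, 0) \<notin> P"
    proof
      assume "(0, -k, 0) \<in> P"
      moreover have "Rm s (0, -k, 0) = (\<lambda>i j. - Rm s (0, k, 0) i j)"
        using R_scale[of "-1" "(0, k, 0)"] by simp
      ultimately have "Rm s (0, k, 0) = (\<lambda>i j. 0)" using Canti[of 2 "Rm s (0,k,0)"] True unfolding P_def by auto
      then have "Rm s (0, k, 0) 0 1 = 0" by simp
      then show False using k0 by (simp add: Rm_def)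
    qed
    then show ?thesis using that by blast
  qed
  obtain \<omega> :: "'v \<times> 'v \<times> 'v \<Rightarrow> real" where lw: "linear \<omega>" and pos: "\<forall>x\<in>P. 0 \<le> \<omega> x"
    and wu: "\<omega> u = 1" and wy: "\<omega> y < 0"
    using cu.riesz[OF arch y] by blast
  have wk: "\<omega> (0, k, 0) \<noteq> 0"
  proof -
    have "\<omega> (0, -k, 0) = - \<omega> (0, k, 0)" using linear_neg[OF lw, of "(0,k,0)"] by simp
    then show ?thesis using yk wy by auto
  qed
  define \<omega>' where "\<omega>' w = (\<omega> w + \<omega> (Tw s w)) / 2" for w
  have lT: "linear (Tw s)"
    by (rule linearI) (auto simp: Tw_def s_add s_scale)
  have lw': "linear \<omega>'"
  proof (rule linearI)
    fix x y show "\<omega>' (x + y) = \<omega>' x + \<omega>' y"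
      unfolding \<omega>'_def using linear_add[OF lw] linear_add[OF lT] by (simp add: add_divide_distrib)
  next
    fix r x show "\<omega>' (r *\<^sub>R x) = r *\<^sub>R \<omega>' x"
      unfolding \<omega>'_def using linear_scale[OF lw] linear_scale[OF lT] by (simp add: algebra_simps)
  qed
  have pos': "0 \<le> \<omega>' w" if "Rm s w \<in> C 2" for w
  proof -
    have "Rm s (Tw s w) \<in> C 2" unfolding R_twirl
      by (rule Cmc) (use that in \<open>auto simp: mat_sz_def mtr_def Qm_def\<close>)
    moreover have pw: "\<And>x. Rm s x \<in> C 2 \<Longrightarrow> 0 \<le> \<omega> x" using pos unfolding P_def by blast
    ultimately have "0 \<le> \<omega> w" "0 \<le> \<omega> (Tw s w)" using that by auto
    then show ?thesis unfolding \<omega>'_def by simp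
  qed
  have add3: "\<omega> (a, b, d) = \<omega> (a, 0, 0) + \<omega> (0, b, 0) + \<omega> (0, 0, d)" for a b d by (rule om3[OF lw])
  have neg2: "\<omega> (0, - b, 0) = - \<omega> (0, b, 0)" for b using linear_neg[OF lw, of "(0,b,0)"] by simp
  have v1: "\<omega>' (e,0,0) = 1/2" "\<omega>' (0,e,0) = 0" "\<omega>' (0,0,e) = 1/2"
    using wu add3[of e 0 e] linear_0[OF lw] unfolding \<omega>'_def u_def by (simp_all add: Tw_def s_zero se neg2 zero_prod_def)
  have U: "ucp s C e 2 (phi s \<omega>')" by (rule phi_ucp[OF ROS lw' pos' v1])
  have wk': "\<omega>' (0, k, 0) = \<omega> (0, k, 0)" unfolding \<omega>'_def by (simp add: Tw_def sk)
  have "mtr (phi s \<omega>' k) 0 1 = - phi s \<omega>' k 0 1"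
    unfolding mtr_def phi_def using sk neg2 by (simp add: \<omega>'_def Tw_def inv s_minus)
  moreover have "phi s \<omega>' k 0 1 \<noteq> 0" using wk wk' by (simp add: phi_def)
  ultimately have "mtr (phi s \<omega>' k) 0 1 \<noteq> phi s \<omega>' k 0 1" by linarith
  then have "mtr (phi s \<omega>' k) \<noteq> phi s \<omega>' k" by auto
  moreover have "mtr (phi s \<omega>' k) = phi s \<omega>' k" using H U by (meson one_le_numeral)
  ultimately show False by blast
qed


end

lemma part2_fwd:
  assumes ROS: "real_operator_system s C e" and sid: "\<forall>v. s v = v" and n: "1 \<le> n"
    and U: "ucp s C e n \<phi>"
  shows "mtr (\<phi> v) = \<phi> v"
proof (rule ext, rule ext)
  fix a b
  note RD = ROS[unfolded real_operator_system_def]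
  have Carch: "\<And>n X. 1 \<le> n \<Longrightarrow> X \<in> herm s n \<Longrightarrow> \<exists>r>0. (\<lambda>i j. r *\<^sub>R diag_unit n e i j + X i j) \<in> C n"
    using RD by (elim conjE) simp
  have mz: "\<And>v. \<phi> v \<in> mat_sz n n" and lin: "\<And>a b u v. \<phi> (a *\<^sub>R u + b *\<^sub>R v) = (\<lambda>i j. a * \<phi> u i j + b * \<phi> v i j)"
    and ue: "\<phi> e = id_mat n"
    and cp: "\<And>m X. 1 \<le> m \<Longrightarrow> X \<in> C m \<Longrightarrow> real_psd (m * n) (\<lambda>p q. \<phi> (X (p div n) (q div n)) (p mod n) (q mod n))"
    using U unfolding ucp_def by (elim conjE, simp)+
  define X0 where "X0 = (\<lambda>(i::nat) (j::nat). if i = 0 \<and> j = 0 then v else 0)"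
  have "X0 \<in> herm s 1" unfolding herm_def mat_sz_def mstar_def X0_def using sid by (auto simp: fun_eq_iff)
  then obtain r where "(\<lambda>i j. r *\<^sub>R diag_unit 1 e i j + X0 i j) \<in> C 1" using Carch[of 1] by auto
  from cp[OF _ this] have psd: "real_psd n (\<lambda>p q. \<phi> (r *\<^sub>R e + v) p q)" 
    unfolding real_psd_def by (simp add: diag_unit_def X0_def)
  show "mtr (\<phi> v) a b = \<phi> v a b"
  proof (cases "a < n \<and> b < n")
    case True
    then have "\<phi> (r *\<^sub>R e + 1 *\<^sub>R v) a b = \<phi> (r *\<^sub>R e + 1 *\<^sub>R v) b a" using psd unfolding real_psd_def by simp
    then show ?thesis unfolding lin ue mtr_def id_mat_def by (auto split: if_splits)
  next
    case False
    then show ?thesis using mz[of v] unfolding mat_sz_def mtr_def by auto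
  qed
qed

theorem corollary4p3:
  shows "(\<forall>K :: nat \<Rightarrow> ('f::banach) emat set. real_compact_nc_convex K \<longrightarrow>
            (ncA_trivial_involution K \<longleftrightarrow> symmetric_nc K))
       \<and> (\<forall>(s :: 'v::real_vector \<Rightarrow> 'v) C e. real_operator_system s C e \<longrightarrow>
            ((\<forall>v. s v = v) \<longleftrightarrow>
             (\<forall>n\<ge>1. \<forall>\<phi>. ucp s C e n \<phi> \<longrightarrow> (\<forall>v. mtr (\<phi> v) = \<phi> v))))"
proof -
  have A: "ncA_trivial_involution K \<longleftrightarrow> symmetric_nc K" if K: "real_compact_nc_convex K"
    for K :: "nat \<Rightarrow> ('f::banach) emat set"
  proof
    assume "ncA_trivial_involution K" then show "symmetric_nc K" by (rule part1_triv[OF K])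
  next
    assume S: "symmetric_nc K" then show "ncA_trivial_involution K"
      unfolding ncA_trivial_involution_def ncA_star_def
      using part1_sym[OF K S] by simp
  qed
  have B: "(\<forall>v. s v = v) \<longleftrightarrow> (\<forall>n\<ge>1. \<forall>\<phi>. ucp s C e n \<phi> \<longrightarrow> (\<forall>v. mtr (\<phi> v) = \<phi> v))"
    if ROS: "real_operator_system s C e" for s :: "'v::real_vector \<Rightarrow> 'v" and C e
  proof
    assume "\<forall>v. s v = v"
    then show "\<forall>n\<ge>1. \<forall>\<phi>. ucp s C e n \<phi> \<longrightarrow> (\<forall>v. mtr (\<phi> v) = \<phi> v)"
      using part2_fwd[OF ROS] by blast
  next
    assume H: "\<forall>n\<ge>1. \<forall>\<phi>. ucp s C e n \<phi> \<longrightarrow> (\<forall>v. mtr (\<phi> v) = \<phi> v)"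
    note RD = ROS[unfolded real_operator_system_def]
    have lin: "linear s" using RD by (elim conjE) simp
    have inv: "\<And>v. s (s v) = v" using RD by (elim conjE) simp
    show "\<forall>v. s v = v" using part2_back[OF lin inv ROS H] by blast
  qed
  show ?thesis
  proof (intro conjI allI impI)
    fix K :: "nat \<Rightarrow> ('f::banach) emat set" assume "real_compact_nc_convex K"
    then show "ncA_trivial_involution K \<longleftrightarrow> symmetric_nc K" by (rule A)
  next
    fix s :: "'v::real_vector \<Rightarrow> 'v" and C e assume "real_operator_system s C e"
    then show "(\<forall>v. s v = v) \<longleftrightarrow> (\<forall>n\<ge>1. \<forall>\<phi>. ucp s C e n \<phi> \<longrightarrow> (\<forall>v. mtr (\<phi> v) = \<phi> v))" by (rule B)
  qed
qed

end
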